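(* Let $(X_n)_{n\ge0}$, $(Z_n)_{n\ge0}$, $(\bar Z_n)_{n\ge0}$ be random processes on a common probability space, adapted to a filtration $(\mathcal F_n)$ and taking values in a measurable space $\Omega$, with $X_n\sim p_n$, $Z_n\sim q_n$, $\bar Z_n\sim\bar q_n$. Let $B_n\subseteq\Omega$ be measurable sets such that for every $n\in\mathbb{N}_0$: (1) if $X_k\in B_k^c$ for all $0\le k\le n-1$, then $Z_n=\bar Z_n$; (2) $\chi^2(\bar q_n\|p_n)\le D_n^2$; (3) $\mathbb{P}(X_n\in B_n)\le\delta_n$. Then for every $n$, $$\mathrm{TV}(q_n,\bar q_n)\le\sum_{k=0}^{n-1}(D_k^2+1)^{1/2}\delta_k^{1/2},\qquad \mathrm{TV}(p_n,q_n)\le D_n+\sum_{k=0}^{n-1}(D_k^2+1)^{1/2}\delta_k^{1/2}.$$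
   Context: $\chi^2(q\|p)=\int (dq/dp)^2\,dp-1$ (infinite if $q\not\ll p$); $\mathrm{TV}$ denotes total variation distance. *)

theory Defs
  imports "HOL-Probability.Probability"
begin

definition chi_sq :: "'b measure \<Rightarrow> 'b measure \<Rightarrow> ereal" where
  "chi_sq q p =
     (if absolutely_continuous p q
      then enn2ereal (\<integral>\<^sup>+ x. (RN_deriv p q x)\<^sup>2 \<partial>p) - 1
      else \<infinity>)"

definition tv_dist :: "'b measure \<Rightarrow> 'b measure \<Rightarrow> real" where
  "tv_dist p q = (SUP A \<in> sets p. \<bar>measure p A - measure q A\<bar>)"

end

theory Submission imports Defs begin
lemma ereal_aux:
  fixes I :: ennreal and c :: real
  assumes "enn2ereal I - 1 \<le> ereal c" "c \<ge> 0"
  shows "I \<le> ennreal (c + 1)"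
proof (cases I rule: ennreal_cases)
  case (real r)
  then have "ereal (r - 1) \<le> ereal c" using assms(1) by (simp add: one_ereal_def)
  then have "r \<le> c + 1" by simp
  then show ?thesis using real by (simp add: ennreal_leI)
next
  case top
  then show ?thesis using assms(1) by simp
qed

lemma chi_tv:
  fixes P Q :: "'b measure" and D :: real
  assumes P: "prob_space P" and Q: "prob_space Q" and sQ: "sets Q = sets P"
    and chi: "chi_sq Q P \<le> ereal (D\<^sup>2)" and D: "D \<ge> 0" and A: "A \<in> sets P"
  shows "\<bar>measure P A - measure Q A\<bar> \<le> D"
proof -
  interpret P: prob_space P by fact
  interpret Q: prob_space Q by fact
  have ac: "absolutely_continuous P Q"
    using chi unfolding chi_sq_def by (auto split: if_splits)
  define f where "f = RN_deriv P Q"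
  have fm[measurable]: "f \<in> borel_measurable P" unfolding f_def by simp
  have Qd: "density P f = Q" unfolding f_def using P.density_RN_deriv[OF ac sQ] .
  have I: "(\<integral>\<^sup>+ x. (f x)\<^sup>2 \<partial>P) \<le> ennreal (D\<^sup>2 + 1)"
  proof -
    have "enn2ereal (\<integral>\<^sup>+ x. (f x)\<^sup>2 \<partial>P) - 1 \<le> ereal (D\<^sup>2)"
      using chi ac unfolding chi_sq_def f_def by simp
    thus ?thesis by (rule ereal_aux) simp
  qed
  have f1: "(\<integral>\<^sup>+ x. f x \<partial>P) = 1"
  proof -
    have "(\<integral>\<^sup>+ x. f x \<partial>P) = (\<integral>\<^sup>+ x. f x * indicator (space P) x \<partial>P)"
      by (rule nn_integral_cong) simp
    also have "\<dots> = emeasure (density P f) (space P)"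
      by (rule emeasure_density[symmetric]) auto
    also have "\<dots> = emeasure Q (space Q)"
      using Qd space_density[of P f] by simp
    finally show ?thesis by (simp add: Q.emeasure_space_1)
  qed
  have fin: "AE x in P. f x \<noteq> \<infinity>"
    by (rule nn_integral_PInf_AE) (use f1 in auto)
  define g where "g x = enn2real (f x)" for x
  have gm[measurable]: "g \<in> borel_measurable P" unfolding g_def by simp
  have gnn[simp]: "g x \<ge> 0" for x by (simp add: g_def)
  have fg: "AE x in P. f x = ennreal (g x)"
    using fin unfolding g_def by (auto simp: ennreal_enn2real_if less_top)
  have Qg: "Q = density P (\<lambda>x. ennreal (g x))"
    using Qd density_cong[OF fm _ fg] by simp
  have g1: "(\<integral>\<^sup>+ x. ennreal (g x) \<partial>P) = 1"
    using f1 nn_integral_cong_AE[OF fg] by simp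
  have gi: "integrable P g"
    by (rule integrableI_nn_integral_finite[where x=1]) (auto simp: g1)
  have Eg: "(\<integral>x. g x \<partial>P) = 1"
    using integral_eq_nn_integral[OF gm] g1 by simp
  have g2n: "(\<integral>\<^sup>+ x. ennreal ((g x)\<^sup>2) \<partial>P) \<le> ennreal (D\<^sup>2 + 1)"
  proof -
    have "AE x in P. ennreal ((g x)\<^sup>2) = (f x)\<^sup>2"
      using fg by eventually_elim (simp add: g_def, metis ennreal_power enn2real_nonneg)
    hence "(\<integral>\<^sup>+ x. ennreal ((g x)\<^sup>2) \<partial>P) = (\<integral>\<^sup>+ x. (f x)\<^sup>2 \<partial>P)"
      by (rule nn_integral_cong_AE)
    with I show ?thesis by simp
  qed
  have g2i: "integrable P (\<lambda>x. (g x)\<^sup>2)"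
  proof -
    have "(\<integral>\<^sup>+ x. ennreal ((g x)\<^sup>2) \<partial>P) < top"
      using g2n by (simp add: le_less_trans)
    thus ?thesis by (intro integrableI_bounded) auto
  qed
  have Eg2: "(\<integral>x. (g x)\<^sup>2 \<partial>P) \<le> D\<^sup>2 + 1"
  proof -
    have "(\<integral>x. (g x)\<^sup>2 \<partial>P) = enn2real (\<integral>\<^sup>+ x. ennreal ((g x)\<^sup>2) \<partial>P)"
      by (rule integral_eq_nn_integral) auto
    also have "\<dots> \<le> D\<^sup>2 + 1" using g2n
      by (intro enn2real_leI) auto
    finally show ?thesis .
  qed
  define h where "h x = (g x - 1) * indicator A x" for x
  have hm[measurable]: "h \<in> borel_measurable P" unfolding h_def using A by measurable
  have hi: "integrable P h" unfolding h_def
    using gi A by (intro integrable_real_mult_indicator Bochner_Integration.integrable_diff) auto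
  have h2le: "(h x)\<^sup>2 \<le> (g x)\<^sup>2 - 2 * g x + 1" for x
  proof -
    have "0 \<le> (g x - 1) * (g x - 1)" by simp
    then show ?thesis
      unfolding h_def by (cases "x \<in> A") (auto simp: power2_eq_square algebra_simps)
  qed
  have h2i: "integrable P (\<lambda>x. (h x)\<^sup>2)"
    by (rule Bochner_Integration.integrable_bound[where f="\<lambda>x. (g x)\<^sup>2 - 2 * g x + 1"])
       (use g2i gi h2le in \<open>auto intro!: AE_I2 order_trans[OF _ abs_ge_self]\<close>)
  have "(\<integral>x. (h x)\<^sup>2 \<partial>P) \<le> (\<integral>x. (g x)\<^sup>2 - 2 * g x + 1 \<partial>P)"
    by (rule integral_mono) (use g2i gi h2i h2le in auto)
  also have "\<dots> = (\<integral>x. (g x)\<^sup>2 \<partial>P) - 2 * (\<integral>x. g x \<partial>P) + 1"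
    using g2i gi by (simp add: P.prob_space)
  finally have Eh2: "(\<integral>x. (h x)\<^sup>2 \<partial>P) \<le> D\<^sup>2" using Eg Eg2 by simp
  have "0 \<le> P.variance h" by (simp add: integral_nonneg)
  hence "(\<integral>x. h x \<partial>P)\<^sup>2 \<le> D\<^sup>2" using P.variance_eq[OF hi h2i] Eh2 by simp
  hence habs: "\<bar>\<integral>x. h x \<partial>P\<bar> \<le> D" using D by (metis abs_le_square_iff abs_of_nonneg)
  have mQ: "measure Q A = (\<integral>x. g x * indicator A x \<partial>P)"
  proof -
    have "measure Q A = integral\<^sup>L Q (indicator A)"
      using A sQ by (simp add: Q.emeasure_eq_measure)
    also have "\<dots> = (\<integral>x. g x *\<^sub>R indicator A x \<partial>P)"
      unfolding Qg by (rule integral_density) (use A in auto)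
    finally show ?thesis by simp
  qed
  have "(\<integral>x. h x \<partial>P) = measure Q A - measure P A"
  proof -
    have "(\<integral>x. h x \<partial>P) = (\<integral>x. g x * indicator A x - indicator A x \<partial>P)"
      unfolding h_def by (simp add: left_diff_distrib)
    also have "\<dots> = (\<integral>x. g x * indicator A x \<partial>P) - (\<integral>x. indicator A x \<partial>P)"
      using gi A by (intro Bochner_Integration.integral_diff integrable_real_mult_indicator) (auto intro!: integrable_real_indicator simp: P.emeasure_eq_measure)
    also have "\<dots> = measure Q A - measure P A" using A mQ by simp
    finally show ?thesis .
  qed
  with habs show ?thesis by simp
qed

theorem theorem5:
  fixes M :: "'a measure" and N :: "'b measure"
    and F :: "nat \<Rightarrow> 'a measure"
    and X Z Zbar :: "nat \<Rightarrow> 'a \<Rightarrow> 'b"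
    and p q qbar :: "nat \<Rightarrow> 'b measure"
    and B :: "nat \<Rightarrow> 'b set"
    and D \<delta> :: "nat \<Rightarrow> real"
  assumes "prob_space M"
    and "filtration (space M) F"
    and "\<And>n. subalgebra M (F n)"
    and "\<And>n. X n \<in> F n \<rightarrow>\<^sub>M N"
    and "\<And>n. Z n \<in> F n \<rightarrow>\<^sub>M N"
    and "\<And>n. Zbar n \<in> F n \<rightarrow>\<^sub>M N"
    and "\<And>n. p n = distr M N (X n)"
    and "\<And>n. q n = distr M N (Z n)"
    and "\<And>n. qbar n = distr M N (Zbar n)"
    and "\<And>n. B n \<in> sets N"
    and "\<And>n. D n \<ge> 0"
    and cond1: "\<And>n \<omega>. \<omega> \<in> space M \<Longrightarrow> (\<forall>k<n. X k \<omega> \<notin> B k) \<Longrightarrow> Z n \<omega> = Zbar n \<omega>"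
    and cond2: "\<And>n. chi_sq (qbar n) (p n) \<le> ereal ((D n)\<^sup>2)"
    and cond3: "\<And>n. measure M {\<omega> \<in> space M. X n \<omega> \<in> B n} \<le> \<delta> n"
  shows "\<forall>n. tv_dist (q n) (qbar n) \<le> (\<Sum>k<n. sqrt ((D k)\<^sup>2 + 1) * sqrt (\<delta> k))
           \<and> tv_dist (p n) (q n) \<le> D n + (\<Sum>k<n. sqrt ((D k)\<^sup>2 + 1) * sqrt (\<delta> k))"
proof -
  interpret M: prob_space M by fact
  have Xm: "X n \<in> M \<rightarrow>\<^sub>M N" for n using measurable_from_subalg assms(3,4) by blast
  have Zm: "Z n \<in> M \<rightarrow>\<^sub>M N" for n using measurable_from_subalg assms(3,5) by blast
  have Zbm: "Zbar n \<in> M \<rightarrow>\<^sub>M N" for n using measurable_from_subalg assms(3,6) by blast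
  define S where "S n = (\<Sum>k<n. sqrt ((D k)\<^sup>2 + 1) * sqrt (\<delta> k))" for n
  have termb: "measure M {\<omega> \<in> space M. X k \<omega> \<in> B k} \<le> sqrt ((D k)\<^sup>2 + 1) * sqrt (\<delta> k)" for k
  proof -
    define m where "m = measure M {\<omega> \<in> space M. X k \<omega> \<in> B k}"
    have m0: "0 \<le> m" "m \<le> 1" "m \<le> \<delta> k" unfolding m_def using cond3 by auto
    have "m = sqrt m * sqrt m" using m0 by simp
    also have "\<dots> \<le> sqrt m" by (rule mult_left_le) (use m0 in auto)
    also have "\<dots> \<le> sqrt (\<delta> k)" using m0 by simp
    also have "\<dots> \<le> sqrt ((D k)\<^sup>2 + 1) * sqrt (\<delta> k)"
      using m0 by (simp add: mult_le_cancel_right1)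
    finally show ?thesis unfolding m_def .
  qed
  have part1: "\<bar>measure (q n) A - measure (qbar n) A\<bar> \<le> S n" if A: "A \<in> sets N" for n A
  proof -
    define C where "C = (\<Union>k\<in>{..<n}. {\<omega> \<in> space M. X k \<omega> \<in> B k})"
    have Ck: "{\<omega> \<in> space M. X k \<omega> \<in> B k} \<in> sets M" for k
      using Xm assms(10) by measurable
    have C: "C \<in> sets M" unfolding C_def using Ck by auto
    have mC: "measure M C \<le> S n"
    proof -
      have "measure M C \<le> (\<Sum>k<n. measure M {\<omega> \<in> space M. X k \<omega> \<in> B k})"
        unfolding C_def by (rule M.finite_measure_subadditive_finite) (use Ck in auto)
      also have "\<dots> \<le> S n" unfolding S_def by (rule sum_mono) (rule termb)
      finally show ?thesis .
    qed
    define EZ where "EZ = Z n -` A \<inter> space M"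
    define EZb where "EZb = Zbar n -` A \<inter> space M"
    have EZ: "EZ \<in> sets M" unfolding EZ_def using Zm A by measurable
    have EZb: "EZb \<in> sets M" unfolding EZb_def using Zbm A by measurable
    have s1: "EZ \<subseteq> EZb \<union> C" unfolding EZ_def EZb_def C_def using cond1[of _ n] by auto
    have s2: "EZb \<subseteq> EZ \<union> C" unfolding EZ_def EZb_def C_def using cond1[of _ n] by force
    have "measure M EZ \<le> measure M EZb + measure M C"
      using M.finite_measure_mono[OF s1] measure_Un_le[OF EZb C] EZb C by auto
    moreover have "measure M EZb \<le> measure M EZ + measure M C"
      using M.finite_measure_mono[OF s2] measure_Un_le[OF EZ C] EZ C by auto
    moreover have "measure (q n) A = measure M EZ" "measure (qbar n) A = measure M EZb"
      unfolding EZ_def EZb_def using assms(8,9) measure_distr[OF Zm A] measure_distr[OF Zbm A] by auto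
    ultimately show ?thesis using mC by linarith
  qed
  have part2: "\<bar>measure (p n) A - measure (qbar n) A\<bar> \<le> D n" if A: "A \<in> sets N" for n A
  proof (rule chi_tv)
    show "prob_space (p n)" using assms(7) M.prob_space_distr[OF Xm] by simp
    show "prob_space (qbar n)" using assms(9) M.prob_space_distr[OF Zbm] by simp
    show "sets (qbar n) = sets (p n)" using assms(7,9) by simp
    show "A \<in> sets (p n)" using assms(7) A by simp
  qed (use cond2 assms(11) in auto)
  show ?thesis
  proof (intro allI conjI)
    fix n
    show "tv_dist (q n) (qbar n) \<le> (\<Sum>k<n. sqrt ((D k)\<^sup>2 + 1) * sqrt (\<delta> k))"
      unfolding tv_dist_def S_def[symmetric]
      by (rule cSUP_least) (use part1 assms(8) in auto)
    show "tv_dist (p n) (q n) \<le> D n + (\<Sum>k<n. sqrt ((D k)\<^sup>2 + 1) * sqrt (\<delta> k))"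
      unfolding tv_dist_def S_def[symmetric]
    proof (rule cSUP_least)
      fix A assume "A \<in> sets (p n)"
      hence A: "A \<in> sets N" using assms(7) by simp
      show "\<bar>measure (p n) A - measure (q n) A\<bar> \<le> D n + S n"
        using part1[OF A, of n] part2[OF A, of n] by linarith
    qed (use assms(7) in auto)
  qed
qed

end
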